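(* Let $X$ be a Dedekind complete Riesz space and let $x,y,v,w\in X^{s}_{+}$ with $x\wedge y=0$ and $v\wedge w=0$. Then $$(x+v)\wedge(y+w)=x\wedge w+y\wedge v,$$ and the two summands $x\wedge w$ and $y\wedge v$ are disjoint.
   Context: For a Dedekind complete Riesz space $X$, its sup-completion $X^{s}$ is the set of classes of nonempty upward directed subsets of $X$ under $A\sim B$ iff $\sup_{a\in A}(x\wedge a)=\sup_{b\in B}(x\wedge b)$ for all $x\in X$, with the induced addition, nonnegative scalar multiplication and order; $X\subseteq X^{s}$. It is a lattice-ordered cone in which every nonempty subset has a supremum; $X^s_+=\{x\in X^s:x\ge0\}$; elements $a,b\in X^s_+$ are disjoint if $a\wedge b=0$. *)

theory Defs
  imports Complex_Main
begin

class dc_riesz_space = ordered_real_vector + conditionally_complete_lattice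

definition updir :: "'a::order set \<Rightarrow> bool" where
  "updir A \<longleftrightarrow> A \<noteq> {} \<and> (\<forall>a\<in>A. \<forall>b\<in>A. \<exists>c\<in>A. a \<le> c \<and> b \<le> c)"

definition sc_rel :: "'a::dc_riesz_space set \<Rightarrow> 'a set \<Rightarrow> bool" where
  "sc_rel A B \<longleftrightarrow> (\<forall>x. (SUP a\<in>A. inf x a) = (SUP b\<in>B. inf x b))"

text \<open>The sup-completion: equivalence classes of nonempty upward directed sets.\<close>
typedef (overloaded) 'a supc =
  "{C. \<exists>A. updir A \<and> C = {B. updir B \<and> sc_rel A B}} :: 'a::dc_riesz_space set set set"
proof -
  have "updir {0::'a}" by (simp add: updir_def)
  then show ?thesis by blast
qed

definition sc_class :: "'a::dc_riesz_space set \<Rightarrow> 'a supc" where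
  "sc_class A = Abs_supc {B. updir B \<and> sc_rel A B}"

definition sc_rep :: "'a::dc_riesz_space supc \<Rightarrow> 'a set" where
  "sc_rep c = (SOME A. A \<in> Rep_supc c)"

definition sc_emb :: "'a::dc_riesz_space \<Rightarrow> 'a supc" where
  "sc_emb x = sc_class {x}"

instantiation supc :: (dc_riesz_space) ord
begin
definition less_eq_supc :: "'a supc \<Rightarrow> 'a supc \<Rightarrow> bool" where
  "less_eq_supc c d \<longleftrightarrow>
     (\<forall>x. (SUP a\<in>sc_rep c. inf x a) \<le> (SUP b\<in>sc_rep d. inf x b))"
definition less_supc :: "'a supc \<Rightarrow> 'a supc \<Rightarrow> bool" where
  "less_supc c d \<longleftrightarrow> c \<le> d \<and> \<not> d \<le> c"
instance ..
end

instantiation supc :: (dc_riesz_space) zero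
begin
definition zero_supc :: "'a supc" where "zero_supc = sc_emb 0"
instance ..
end

instantiation supc :: (dc_riesz_space) plus
begin
definition plus_supc :: "'a supc \<Rightarrow> 'a supc \<Rightarrow> 'a supc" where
  "plus_supc c d = sc_class {a + b | a b. a \<in> sc_rep c \<and> b \<in> sc_rep d}"
instance ..
end

instantiation supc :: (dc_riesz_space) inf
begin
definition inf_supc :: "'a supc \<Rightarrow> 'a supc \<Rightarrow> 'a supc" where
  "inf_supc c d = (THE e. e \<le> c \<and> e \<le> d \<and> (\<forall>f. f \<le> c \<and> f \<le> d \<longrightarrow> f \<le> e))"
instance ..
end

end

theory Submission
  imports Defs "HOL-Library.Lattice_Algebras"
begin

instance dc_riesz_space \<subseteq> lattice_ab_group_add ..

lemma inf_add_le:
  fixes a b c :: "'a::dc_riesz_space"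
  assumes "0 \<le> a" "0 \<le> b" "0 \<le> c"
  shows "inf c (a + b) \<le> inf c a + inf c b"
proof -
  let ?z = "inf c (a + b)"
  have "?z - inf c a = sup (?z - c) (?z - a)"
    by (simp add: diff_inf_eq_sup add_sup_distrib_left)
  also have "\<dots> \<le> inf c b"
  proof (rule sup_least)
    have "?z - c \<le> 0" by simp
    also have "0 \<le> inf c b" using assms by simp
    finally show "?z - c \<le> inf c b" .
    have "?z - a \<le> ?z" using assms(1) by (simp add: diff_le_eq add_increasing2)
    then have "?z - a \<le> c" using inf.cobounded1[of c "a+b"] by (rule order_trans)
    moreover have "?z - a \<le> b"
      using inf.cobounded2[of c "a+b"] by (simp add: diff_le_eq add.commute)
    ultimately show "?z - a \<le> inf c b" by simp
  qed
  finally have "?z - inf c a \<le> inf c b" .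
  then show ?thesis by (metis diff_le_eq add.commute)
qed

lemma disj_key:
  fixes X Y V W :: "'a::dc_riesz_space"
  assumes "0 \<le> X" "0 \<le> Y" "0 \<le> V" "0 \<le> W" "inf X Y = 0" "inf V W = 0"
  shows "inf (X + V) (Y + W) \<le> inf X W + inf Y V"
proof -
  have 1: "inf (X + V) (Y + W) \<le> inf (Y + W) X + inf (Y + W) V"
    using inf_add_le[of X V "Y+W"] assms by (simp add: inf_commute)
  have 2: "inf (Y + W) X \<le> inf X W"
    using inf_add_le[of Y W X] assms by (simp add: inf_commute)
  have 3: "inf (Y + W) V \<le> inf Y V"
    using inf_add_le[of Y W V] assms by (simp add: inf_commute)
  show ?thesis using 1 add_mono[OF 2 3] by (rule order_trans)
qed

lemma inf_SUP_le:
  fixes f :: "'b \<Rightarrow> 'a::dc_riesz_space"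
  assumes "I \<noteq> {}" "bdd_above (f ` I)" "\<And>i. i \<in> I \<Longrightarrow> inf y (f i) \<le> M"
  shows "inf y (SUP i\<in>I. f i) \<le> M"
proof -
  let ?S = "SUP i\<in>I. f i"
  have "f i \<le> M + sup y ?S - y" if "i \<in> I" for i
  proof -
    have "f i = inf y (f i) + sup y (f i) - y" using add_eq_inf_sup[of y "f i"] by (simp add: algebra_simps)
    also have "\<dots> \<le> M + sup y ?S - y"
      using assms(3)[OF that] cSUP_upper[OF that assms(2)]
      by (simp add: add_mono le_supI2 sup.coboundedI2 diff_right_mono)
    finally show ?thesis .
  qed
  then have "?S \<le> M + sup y ?S - y" using assms(1) by (intro cSUP_least) auto
  then have "y + ?S \<le> M + sup y ?S" by (simp add: le_diff_eq add.commute)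
  then show ?thesis using add_eq_inf_sup[of y ?S]
    by (metis add.commute add_le_cancel_right)
qed

lemma SUP_add_le:
  fixes f :: "'b \<Rightarrow> 'a::dc_riesz_space"
  assumes "I \<noteq> {}" "bdd_above (f ` I)" "\<And>i. i \<in> I \<Longrightarrow> f i + c \<le> M"
  shows "(SUP i\<in>I. f i) + c \<le> M"
proof -
  have "(SUP i\<in>I. f i) \<le> M - c" using assms by (intro cSUP_least) (auto simp: le_diff_eq)
  then show ?thesis by (simp add: le_diff_eq)
qed


lemma SUP_add_eq:
  fixes f :: "'b \<Rightarrow> 'a::dc_riesz_space"
  assumes "I \<noteq> {}" "bdd_above (f ` I)"
  shows "(SUP i\<in>I. f i) + c = (SUP i\<in>I. f i + c)"
proof (rule antisym)
  obtain K where K: "\<And>i. i \<in> I \<Longrightarrow> f i \<le> K" using assms(2) by (auto simp: bdd_above_def)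
  have b: "bdd_above ((\<lambda>i. f i + c) ` I)"
    by (rule bdd_aboveI[where M="K + c"]) (auto intro: add_right_mono K)
  show "(SUP i\<in>I. f i) + c \<le> (SUP i\<in>I. f i + c)"
    by (rule SUP_add_le[OF assms]) (rule cSUP_upper[OF _ b])
  show "(SUP i\<in>I. f i + c) \<le> (SUP i\<in>I. f i) + c"
    using assms by (intro cSUP_least) (auto intro: add_right_mono cSUP_upper)
qed

lemma bdd_add:
  fixes f :: "'b \<Rightarrow> 'a::dc_riesz_space"
  assumes "bdd_above (f ` I)"
  shows "bdd_above ((\<lambda>i. f i + c) ` I)"
proof -
  obtain K where K: "\<And>i. i \<in> I \<Longrightarrow> f i \<le> K" using assms by (auto simp: bdd_above_def)
  show ?thesis by (rule bdd_aboveI[where M="K + c"]) (auto intro: add_right_mono K)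
qed

lemma inf_SUP_add_le:
  fixes f g :: "'b \<Rightarrow> 'a::dc_riesz_space"
  assumes "I \<noteq> {}" "bdd_above (f ` I)" "J \<noteq> {}" "bdd_above (g ` J)"
    and "\<And>i j. i \<in> I \<Longrightarrow> j \<in> J \<Longrightarrow> inf u (f i + g j) \<le> M"
  shows "inf u ((SUP i\<in>I. f i) + (SUP j\<in>J. g j)) \<le> M"
proof -
  let ?G = "SUP j\<in>J. g j"
  have "inf u ((SUP i\<in>I. f i) + ?G) = inf u (SUP i\<in>I. f i + ?G)"
    by (simp add: SUP_add_eq[OF assms(1,2)])
  also have "\<dots> \<le> M"
  proof (rule inf_SUP_le[OF assms(1) bdd_add[OF assms(2)]])
    fix i assume i: "i \<in> I"
    have "inf u (f i + ?G) = inf u (SUP j\<in>J. g j + f i)"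
      using SUP_add_eq[OF assms(3,4), of "f i"] by (metis add.commute)
    also have "\<dots> \<le> M"
      by (rule inf_SUP_le[OF assms(3) bdd_add[OF assms(4)]])
         (simp add: add.commute assms(5)[OF i])
    finally show "inf u (f i + ?G) \<le> M" .
  qed
  finally show ?thesis .
qed

lemma bdd_inf: "bdd_above ((\<lambda>a. inf (u::'a::dc_riesz_space) (f a)) ` A)"
  by (rule bdd_aboveI[where M=u]) auto

definition ev :: "'a::dc_riesz_space supc \<Rightarrow> 'a \<Rightarrow> 'a" where
  "ev c u = (SUP a\<in>sc_rep c. inf u a)"

lemma sc_rel_refl: "sc_rel A A" by (simp add: sc_rel_def)

lemma rep_props: "updir (sc_rep c) \<and> Rep_supc c = {B. updir B \<and> sc_rel (sc_rep c) B}"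
proof -
  obtain A where A: "updir A" "Rep_supc c = {B. updir B \<and> sc_rel A B}"
    using Rep_supc[of c] by auto
  have "A \<in> Rep_supc c" using A by (simp add: sc_rel_refl)
  then have "sc_rep c \<in> Rep_supc c" unfolding sc_rep_def by (rule someI)
  then have r: "updir (sc_rep c)" "sc_rel A (sc_rep c)" using A by auto
  have "sc_rel A B \<longleftrightarrow> sc_rel (sc_rep c) B" for B
    using r(2) by (simp add: sc_rel_def)
  then show ?thesis using A r by auto
qed

lemma rep_ne: "sc_rep c \<noteq> {}"
  using rep_props[of c] by (simp add: updir_def)

lemma ev_class:
  assumes "updir A"
  shows "ev (sc_class A) u = (SUP a\<in>A. inf u a)"
proof -
  have S: "{B. updir B \<and> sc_rel A B} \<in> {C. \<exists>A. updir A \<and> C = {B. updir B \<and> sc_rel A B}}"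
    using assms by blast
  have R: "Rep_supc (sc_class A) = {B. updir B \<and> sc_rel A B}"
    unfolding sc_class_def by (rule Abs_supc_inverse[OF S])
  have "sc_rep (sc_class A) \<in> Rep_supc (sc_class A)"
    using rep_props[of "sc_class A"] by (simp add: sc_rel_refl)
  then have "sc_rel A (sc_rep (sc_class A))" using R by auto
  then show ?thesis unfolding ev_def sc_rel_def by metis
qed

lemma ev_ext:
  assumes "\<And>u. ev c u = ev d u"
  shows "c = d"
proof -
  have "sc_rel (sc_rep c) B \<longleftrightarrow> sc_rel (sc_rep d) B" for B
    using assms unfolding sc_rel_def ev_def by metis
  then have "Rep_supc c = Rep_supc d" using rep_props[of c] rep_props[of d] by auto
  then show ?thesis by (simp add: Rep_supc_inject)
qed

lemma le_iff: "c \<le> d \<longleftrightarrow> (\<forall>u. ev c u \<le> ev d u)"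
  by (simp add: less_eq_supc_def ev_def)

lemma ev_upper: "a \<in> sc_rep c \<Longrightarrow> inf u a \<le> ev c u"
  unfolding ev_def by (rule cSUP_upper[OF _ bdd_inf])

lemma ev_le: "ev c u \<le> u"
  unfolding ev_def using rep_ne by (intro cSUP_least) auto

lemma ev_mono:
  assumes "u \<le> u'" shows "ev c u \<le> ev c u'"
  unfolding ev_def using rep_ne
  by (intro cSUP_least) (auto intro!: order_trans[OF _ cSUP_upper[OF _ bdd_inf]] inf_mono assms)

lemma ev_self: "a \<in> sc_rep c \<Longrightarrow> a \<le> ev c a"
  using ev_upper[of a c a] by simp

lemma ev_zero: "ev 0 u = inf u 0"
proof -
  have "updir {0::'a}" by (simp add: updir_def)
  then show ?thesis by (simp add: zero_supc_def sc_emb_def ev_class)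
qed

lemma ev_inf: "ev (inf c d) u = inf (ev c u) (ev d u)"
proof -
  let ?A = "sc_rep c" and ?B = "sc_rep d"
  let ?S = "{inf a b | a b. a \<in> ?A \<and> b \<in> ?B}"
  let ?E = "sc_class ?S"
  have uA: "updir ?A" and uB: "updir ?B" using rep_props by auto
  have uS: "updir ?S"
  proof -
    have "?S \<noteq> {}" using uA uB by (auto simp: updir_def)
    moreover have "\<exists>z\<in>?S. p \<le> z \<and> q \<le> z" if pS: "p \<in> ?S" and qS: "q \<in> ?S" for p q
    proof -
      obtain a b where ab: "p = inf a b" "a \<in> ?A" "b \<in> ?B" using pS by blast
      obtain a' b' where ab': "q = inf a' b'" "a' \<in> ?A" "b' \<in> ?B" using qS by blast
      obtain a'' where "a'' \<in> ?A" "a \<le> a''" "a' \<le> a''" using uA ab ab' unfolding updir_def by blast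
      moreover obtain b'' where "b'' \<in> ?B" "b \<le> b''" "b' \<le> b''" using uB ab ab' unfolding updir_def by blast
      ultimately show ?thesis using ab ab'
        by (intro bexI[of _ "inf a'' b''"]) (auto intro: inf_mono le_infI1 le_infI2)
    qed
    ultimately show ?thesis unfolding updir_def by blast
  qed
  have evE: "ev ?E u = inf (ev c u) (ev d u)" for u
  proof -
    have bS: "bdd_above ((\<lambda>z. inf u z) ` ?S)" by (rule bdd_inf)
    have "ev ?E u = (SUP z\<in>?S. inf u z)" by (rule ev_class[OF uS])
    also have "\<dots> = inf (ev c u) (ev d u)"
    proof (rule antisym)
      show "(SUP z\<in>?S. inf u z) \<le> inf (ev c u) (ev d u)"
      proof (rule cSUP_least)
        show "?S \<noteq> {}" using uS by (simp add: updir_def)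
        fix z assume "z \<in> ?S"
        then obtain a b where ab: "z = inf a b" "a \<in> ?A" "b \<in> ?B" by auto
        have h1: "inf u z \<le> inf u a" unfolding ab(1) by (rule inf_mono) simp_all
        have h2: "inf u z \<le> inf u b" unfolding ab(1) by (rule inf_mono) simp_all
        show "inf u z \<le> inf (ev c u) (ev d u)"
          using order_trans[OF h1 ev_upper[OF ab(2)]] order_trans[OF h2 ev_upper[OF ab(3)]] by (rule le_infI)
      qed
      show "inf (ev c u) (ev d u) \<le> (SUP z\<in>?S. inf u z)"
      proof -
        have "inf (ev d u) (SUP a\<in>?A. inf u a) \<le> (SUP z\<in>?S. inf u z)"
        proof (rule inf_SUP_le[OF rep_ne bdd_inf])
          fix a assume a: "a \<in> ?A"
          have "inf (inf u a) (SUP b\<in>?B. inf u b) \<le> (SUP z\<in>?S. inf u z)"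
          proof (rule inf_SUP_le[OF rep_ne bdd_inf])
            fix b assume b: "b \<in> ?B"
            have "inf (inf u a) (inf u b) = inf u (inf a b)" by (simp add: inf_aci)
            also have "\<dots> \<le> (SUP z\<in>?S. inf u z)"
              using a b by (intro cSUP_upper[OF _ bS]) auto
            finally show "inf (inf u a) (inf u b) \<le> (SUP z\<in>?S. inf u z)" .
          qed
          then show "inf (ev d u) (inf u a) \<le> (SUP z\<in>?S. inf u z)"
            by (simp add: ev_def inf_commute)
        qed
        then show ?thesis by (simp add: ev_def inf_commute)
      qed
    qed
    finally show ?thesis .
  qed
  have "inf c d = ?E"
    unfolding inf_supc_def
  proof (rule the_equality)
    show "?E \<le> c \<and> ?E \<le> d \<and> (\<forall>f. f \<le> c \<and> f \<le> d \<longrightarrow> f \<le> ?E)"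
      by (auto simp: le_iff evE)
    fix e assume e: "e \<le> c \<and> e \<le> d \<and> (\<forall>f. f \<le> c \<and> f \<le> d \<longrightarrow> f \<le> e)"
    have "?E \<le> c" "?E \<le> d" by (auto simp: le_iff evE)
    then have "?E \<le> e" using e by blast
    moreover have "e \<le> ?E" using e by (auto simp: le_iff evE)
    ultimately show "e = ?E" by (intro ev_ext antisym) (auto simp: le_iff)
  qed
  then show ?thesis by (simp add: evE)
qed


lemma ev_plus: "ev (c + d) u = (SUP p\<in>UNIV. inf u (ev c (fst p) + ev d (snd p)))"
proof -
  let ?A = "sc_rep c" and ?B = "sc_rep d"
  let ?S = "{a + b | a b. a \<in> ?A \<and> b \<in> ?B}"
  have uA: "updir ?A" and uB: "updir ?B" using rep_props by auto
  have uS: "updir ?S"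
  proof -
    have "?S \<noteq> {}" using uA uB by (auto simp: updir_def)
    moreover have "\<exists>z\<in>?S. p \<le> z \<and> q \<le> z" if pS: "p \<in> ?S" and qS: "q \<in> ?S" for p q
    proof -
      obtain a b where ab: "p = a + b" "a \<in> ?A" "b \<in> ?B" using pS by blast
      obtain a' b' where ab': "q = a' + b'" "a' \<in> ?A" "b' \<in> ?B" using qS by blast
      obtain a'' where "a'' \<in> ?A" "a \<le> a''" "a' \<le> a''" using uA ab ab' unfolding updir_def by blast
      moreover obtain b'' where "b'' \<in> ?B" "b \<le> b''" "b' \<le> b''" using uB ab ab' unfolding updir_def by blast
      ultimately show ?thesis using ab ab'
        by (intro bexI[of _ "a'' + b''"]) (auto intro: add_mono)
    qed
    ultimately show ?thesis unfolding updir_def by blast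
  qed
  have bS: "bdd_above ((\<lambda>z. inf u z) ` ?S)" by (rule bdd_inf)
  have bP: "bdd_above ((\<lambda>p. inf u (ev c (fst p) + ev d (snd p))) ` UNIV)" by (rule bdd_inf)
  have "ev (c + d) u = (SUP z\<in>?S. inf u z)"
    unfolding plus_supc_def by (rule ev_class[OF uS])
  also have "\<dots> = (SUP p\<in>UNIV. inf u (ev c (fst p) + ev d (snd p)))"
  proof (rule antisym)
    show "(SUP z\<in>?S. inf u z) \<le> (SUP p\<in>UNIV. inf u (ev c (fst p) + ev d (snd p)))"
    proof (rule cSUP_least)
      show "?S \<noteq> {}" using uS by (simp add: updir_def)
      fix z assume "z \<in> ?S"
      then obtain a b where ab: "z = a + b" "a \<in> ?A" "b \<in> ?B" by blast
      have "inf u z \<le> inf u (ev c a + ev d b)"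
        unfolding ab(1) by (intro inf_mono order_refl add_mono ev_self ab)
      also have "\<dots> \<le> (SUP p\<in>UNIV. inf u (ev c (fst p) + ev d (snd p)))"
        using cSUP_upper[OF _ bP, of "(a,b)"] by simp
      finally show "inf u z \<le> (SUP p\<in>UNIV. inf u (ev c (fst p) + ev d (snd p)))" .
    qed
    show "(SUP p\<in>UNIV. inf u (ev c (fst p) + ev d (snd p))) \<le> (SUP z\<in>?S. inf u z)"
    proof (rule cSUP_least)
      fix p :: "'a \<times> 'a"
      obtain s t where p: "p = (s, t)" by (cases p)
      have "inf u ((SUP a\<in>?A. inf s a) + (SUP b\<in>?B. inf t b)) \<le> (SUP z\<in>?S. inf u z)"
      proof (rule inf_SUP_add_le[OF rep_ne bdd_inf rep_ne bdd_inf])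
        fix a b assume a: "a \<in> ?A" and b: "b \<in> ?B"
        have "inf u (inf s a + inf t b) \<le> inf u (a + b)"
          by (intro inf_mono order_refl add_mono) simp_all
        also have "\<dots> \<le> (SUP z\<in>?S. inf u z)"
          using a b by (intro cSUP_upper[OF _ bS]) blast
        finally show "inf u (inf s a + inf t b) \<le> (SUP z\<in>?S. inf u z)" .
      qed
      then show "inf u (ev c (fst p) + ev d (snd p)) \<le> (SUP z\<in>?S. inf u z)"
        by (simp add: p ev_def)
    qed simp
  qed
  finally show ?thesis .
qed

lemma ev_ge: "0 \<le> c \<Longrightarrow> inf m 0 \<le> ev c m"
  unfolding le_iff by (metis ev_zero)

lemma ev_pos: "0 \<le> c \<Longrightarrow> 0 \<le> m \<Longrightarrow> 0 \<le> ev c m"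
  using ev_ge[of c m] by (simp add: inf_absorb2)

theorem mainTheorem15:
  fixes x y v w :: "'a::dc_riesz_space supc"
  assumes "0 \<le> x" and "0 \<le> y" and "0 \<le> v" and "0 \<le> w"
    and "inf x y = 0" and "inf v w = 0"
  shows "inf (x + v) (y + w) = inf x w + inf y v \<and> inf (inf x w) (inf y v) = 0"
proof
  have dxy: "inf (ev x m) (ev y m) = inf m 0" for m
    using ev_inf[of x y m] assms(5) ev_zero[of m] by simp
  have dvw: "inf (ev v m) (ev w m) = inf m 0" for m
    using ev_inf[of v w m] assms(6) ev_zero[of m] by simp
  have ge: "inf m 0 \<le> ev c m" if "0 \<le> c" for c m
    using that by (rule ev_ge)
  show "inf (inf x w) (inf y v) = 0"
  proof (rule ev_ext)
    fix u
    have "ev (inf (inf x w) (inf y v)) u = inf (inf (ev x u) (ev y u)) (inf (ev w u) (ev v u))"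
      by (simp add: ev_inf inf_aci)
    also have "\<dots> = inf u 0"
      using dxy[of u] ge[OF assms(4), of u] ge[OF assms(3), of u]
      by (simp add: inf_absorb1 le_infI)
    finally show "ev (inf (inf x w) (inf y v)) u = ev 0 u" by (simp add: ev_zero)
  qed
  show "inf (x + v) (y + w) = inf x w + inf y v"
  proof (rule ev_ext)
    fix u
    let ?M = "SUP p\<in>UNIV. inf u (inf (ev x (fst p)) (ev w (fst p)) + inf (ev y (snd p)) (ev v (snd p)))"
    let ?F = "\<lambda>p. inf u (ev x (fst p) + ev v (snd p))"
    let ?G = "\<lambda>p. inf u (ev y (fst p) + ev w (snd p))"
    have bM: "bdd_above ((\<lambda>p. inf u (inf (ev x (fst p)) (ev w (fst p)) + inf (ev y (snd p)) (ev v (snd p)))) ` UNIV)"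
      by (rule bdd_inf)
    have R: "ev (inf x w + inf y v) u = ?M" by (simp add: ev_plus ev_inf)
    have L: "ev (inf (x + v) (y + w)) u = inf (SUP p\<in>UNIV. ?F p) (SUP p\<in>UNIV. ?G p)"
      by (simp add: ev_plus ev_inf)
    have "inf (SUP p\<in>UNIV. ?F p) (SUP p\<in>UNIV. ?G p) \<le> ?M"
    proof (rule inf_SUP_le[OF _ bdd_inf])
      fix q :: "'a \<times> 'a"
      have "inf (?G q) (SUP p\<in>UNIV. ?F p) \<le> ?M"
      proof (rule inf_SUP_le[OF _ bdd_inf])
        fix p :: "'a \<times> 'a"
        obtain s t where p: "p = (s, t)" by (cases p)
        obtain s' t' where q: "q = (s', t')" by (cases q)
        define m where "m = sup 0 (sup (sup s t) (sup s' t'))"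
        have m0: "0 \<le> m" unfolding m_def by simp
        have X: "ev x s \<le> ev x m" "ev v t \<le> ev v m" "ev y s' \<le> ev y m" "ev w t' \<le> ev w m"
          by (auto intro!: ev_mono simp: m_def le_supI2 le_supI1)
        have "inf (?G q) (?F p) = inf u (inf (ev x s + ev v t) (ev y s' + ev w t'))"
          by (simp add: p q inf_aci)
        also have "\<dots> \<le> inf u (inf (ev x m + ev v m) (ev y m + ev w m))"
          using X by (intro inf_mono order_refl add_mono) auto
        also have "\<dots> \<le> inf u (inf (ev x m) (ev w m) + inf (ev y m) (ev v m))"
          by (intro inf_mono order_refl disj_key ev_pos assms m0)
             (simp_all add: dxy dvw m0 inf_absorb2)
        also have "\<dots> \<le> ?M"
          using cSUP_upper[OF _ bM, of "(m, m)"] by simp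
        finally show "inf (?G q) (?F p) \<le> ?M" .
      qed simp
      then show "inf (SUP p\<in>UNIV. ?F p) (?G q) \<le> ?M" by (simp add: inf_commute)
    qed simp
    moreover have "?M \<le> inf (SUP p\<in>UNIV. ?F p) (SUP p\<in>UNIV. ?G p)"
    proof (rule cSUP_least)
      fix p :: "'a \<times> 'a"
      obtain s t where p: "p = (s, t)" by (cases p)
      have "inf u (inf (ev x s) (ev w s) + inf (ev y t) (ev v t)) \<le> ?F (s, t)"
        by (intro inf_mono order_refl add_mono) simp_all
      also have "\<dots> \<le> (SUP p\<in>UNIV. ?F p)" by (rule cSUP_upper[OF _ bdd_inf]) simp
      finally have 1: "inf u (inf (ev x s) (ev w s) + inf (ev y t) (ev v t)) \<le> (SUP p\<in>UNIV. ?F p)" .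
      have "inf u (inf (ev x s) (ev w s) + inf (ev y t) (ev v t)) \<le> ?G (t, s)"
        by (simp only: fst_conv snd_conv add.commute[of "inf (ev x s) (ev w s)"])
           (intro inf_mono order_refl add_mono; simp)
      also have "\<dots> \<le> (SUP p\<in>UNIV. ?G p)" by (rule cSUP_upper[OF _ bdd_inf]) simp
      finally have 2: "inf u (inf (ev x s) (ev w s) + inf (ev y t) (ev v t)) \<le> (SUP p\<in>UNIV. ?G p)" .
      show "inf u (inf (ev x (fst p)) (ev w (fst p)) + inf (ev y (snd p)) (ev v (snd p)))
            \<le> inf (SUP p\<in>UNIV. ?F p) (SUP p\<in>UNIV. ?G p)"
        using 1 2 by (simp add: p)
    qed simp
    ultimately show "ev (inf (x + v) (y + w)) u = ev (inf x w + inf y v) u"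
      using L R by simp
  qed
qed

end
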